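(* Let $K=\mathbb{F}_{q^n}$, let $\sigma$ be an automorphism of $K$ of order $n>1$ with fixed field $F=\mathbb{F}_q$, and let $f(t)=t^m-\sum_{i=0}^{m-1}a_it^i\in K[t;\sigma]$ ($a_i\in K$, $m\ge 2$) be irreducible and not right-invariant. Let $L_f=S_f\setminus\{0\}$ be the multiplicative loop of $S_f$, and let $H$ be a loop automorphism of $L_f$. Then: (i) $H(K^\times)=K^\times$ and $H|_{K^\times}=\tau$ for some group automorphism $\tau\in\mathrm{Aut}(K^\times)$. (ii) If $n\ge m-1$, then $H(t)=kt$ for some $k\in K^\times$. (iii) If $n\ge m-1$, then for all $i\in\{1,\dots,m-1\}$ and all $z\in K^\times$, $H(zt^i)=H(z)H(t)^i=\tau(z)(kt)^i=\tau(z)\Big(\prod_{l=0}^{i-1}\sigma^l(k)\Big)t^i$. (iv) If $n\ge m-1$, then $H(t^i)=H(t)^i=(kt)^i=\Big(\prod_{l=0}^{i-1}\sigma^l(k)\Big)t^i$ for all $i\in\{1,\dots,m\}$ (where $t^m$ denotes the product $t\,t^{m-1}=\sum_{i=0}^{m-1}a_it^i$ in $S_f$); in particular $H\Big(\sum_{i=0}^{m-1}a_it^i\Big)=k\sigma(k)\cdots\sigma^{m-1}(k)\sum_{i=0}^{m-1}a_it^i$.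
   Context: $R=K[t;\sigma]$ is the twisted polynomial ring: polynomials $\sum b_it^i$ with $b_i\in K$, termwise addition, and multiplication determined by $tb=\sigma(b)t$ for $b\in K$. $f$ is irreducible if it has no factorization $f=gh$ with $\deg g,\deg h<\deg f$; $f$ is right-invariant if the left ideal $Rf$ is two-sided. $S_f$ is the set of elements of $R$ of degree $<m$ with the usual addition and multiplication $g\circ h=gh \bmod_r f$, the remainder of right division of $gh$ by $f$; under the hypotheses it is a proper semifield (finite nonassociative unital division algebra), and $L_f=S_f\setminus\{0\}$ is a loop under $\circ$, in which products are written by juxtaposition and powers $t^i$ ($i<m$) are the usual ones. $K$ is embedded in $S_f$ as the constant polynomials. A loop automorphism is a bijection $H:L_f\to L_f$ with $H(xy)=H(x)H(y)$. *)

theory Defs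
  imports "HOL-Computational_Algebra.Polynomial"
begin

text \<open>Twisted polynomial ring K[t;sigma]: elements are represented by ordinary
  coefficient polynomials (sum b_i t^i), with the same addition, but with the
  multiplication determined by t b = sigma(b) t, i.e.
  (sum b_i t^i)(sum c_j t^j) = sum b_i sigma^i(c_j) t^(i+j).\<close>

definition skew_mult :: "('a::comm_ring_1 \<Rightarrow> 'a) \<Rightarrow> 'a poly \<Rightarrow> 'a poly \<Rightarrow> 'a poly" where
  "skew_mult \<sigma> p q =
     (\<Sum>i\<le>degree p. \<Sum>j\<le>degree q. monom (coeff p i * (\<sigma> ^^ i) (coeff q j)) (i + j))"

definition skew_rmod :: "('a::comm_ring_1 \<Rightarrow> 'a) \<Rightarrow> 'a poly \<Rightarrow> 'a poly \<Rightarrow> 'a poly" where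
  "skew_rmod \<sigma> f p = (THE r. degree r < degree f \<and> (\<exists>g. p = skew_mult \<sigma> g f + r))"

definition skew_irreducible :: "('a::comm_ring_1 \<Rightarrow> 'a) \<Rightarrow> 'a poly \<Rightarrow> bool" where
  "skew_irreducible \<sigma> f \<longleftrightarrow>
     \<not> (\<exists>g h. f = skew_mult \<sigma> g h \<and> degree g < degree f \<and> degree h < degree f)"

text \<open>Right-invariant: the left ideal R f is two-sided, i.e. (R f) R \<subseteq> R f,
  equivalently f g \<in> R f for every g.\<close>

definition right_invariant :: "('a::comm_ring_1 \<Rightarrow> 'a) \<Rightarrow> 'a poly \<Rightarrow> bool" where
  "right_invariant \<sigma> f \<longleftrightarrow>
     (\<forall>g h. \<exists>h'. skew_mult \<sigma> (skew_mult \<sigma> h f) g = skew_mult \<sigma> h' f)"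

definition Sf :: "'a::comm_ring_1 poly \<Rightarrow> 'a poly set" where
  "Sf f = {g. degree g < degree f}"

definition Lf :: "'a::comm_ring_1 poly \<Rightarrow> 'a poly set" where
  "Lf f = {g. g \<noteq> 0 \<and> degree g < degree f}"

definition sf_mult :: "('a::comm_ring_1 \<Rightarrow> 'a) \<Rightarrow> 'a poly \<Rightarrow> 'a poly \<Rightarrow> 'a poly \<Rightarrow> 'a poly" where
  "sf_mult \<sigma> f g h = skew_rmod \<sigma> f (skew_mult \<sigma> g h)"

fun sf_pow :: "('a::comm_ring_1 \<Rightarrow> 'a) \<Rightarrow> 'a poly \<Rightarrow> 'a poly \<Rightarrow> nat \<Rightarrow> 'a poly" where
  "sf_pow \<sigma> f x 0 = 1"
| "sf_pow \<sigma> f x (Suc i) = sf_mult \<sigma> f x (sf_pow \<sigma> f x i)"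

definition loop_automorphism ::
  "('a::comm_ring_1 \<Rightarrow> 'a) \<Rightarrow> 'a poly \<Rightarrow> ('a poly \<Rightarrow> 'a poly) \<Rightarrow> bool" where
  "loop_automorphism \<sigma> f H \<longleftrightarrow>
     bij_betw H (Lf f) (Lf f) \<and>
     (\<forall>x\<in>Lf f. \<forall>y\<in>Lf f. H (sf_mult \<sigma> f x y) = sf_mult \<sigma> f (H x) (H y))"

definition field_automorphism :: "('a::field \<Rightarrow> 'a) \<Rightarrow> bool" where
  "field_automorphism \<sigma> \<longleftrightarrow> bij \<sigma> \<and> (\<forall>x y. \<sigma> (x + y) = \<sigma> x + \<sigma> y) \<and>
     (\<forall>x y. \<sigma> (x * y) = \<sigma> x * \<sigma> y) \<and> \<sigma> 1 = 1"

definition mult_group_automorphism :: "('a::field \<Rightarrow> 'a) \<Rightarrow> bool" where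
  "mult_group_automorphism \<tau> \<longleftrightarrow> bij_betw \<tau> (UNIV - {0}) (UNIV - {0}) \<and>
     (\<forall>x y. x \<noteq> 0 \<longrightarrow> y \<noteq> 0 \<longrightarrow> \<tau> (x * y) = \<tau> x * \<tau> y)"

end

theory Submission
  imports "HOL-Algebra.Multiplicative_Group" Defs
begin

lemma finite_field_cyclic:
  "\<exists>g::'a::{finite,field}. g \<noteq> 0 \<and> (\<forall>x. x \<noteq> 0 \<longrightarrow> (\<exists>i::nat. x = g ^ i))"
proof -
  define R :: "'a ring" where "R = \<lparr>carrier = (UNIV::'a set), monoid.mult = (*), one = 1, zero = 0, add = (+)\<rparr>"
  have cr: "cring R"
    unfolding R_def
  proof (rule cringI)
    show "abelian_group \<lparr>carrier = (UNIV::'a set), monoid.mult = (*), one = 1, zero = 0, add = (+)\<rparr>"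
      by (rule abelian_groupI) (auto simp: add.assoc add.commute intro: exI[of _ "- x" for x])
    show "Group.comm_monoid \<lparr>carrier = (UNIV::'a set), monoid.mult = (*), one = 1, zero = 0, add = (+)\<rparr>"
      by (rule comm_monoidI) (auto simp: mult.assoc mult.commute)
  qed (auto simp: distrib_right)
  have fl: "field R"
    apply (rule cring.cring_fieldI2[OF cr])
     apply (simp add: R_def)
    apply (simp add: R_def)
    by (metis right_inverse)
  have pw: "a [^]\<^bsub>R\<^esub> (i::nat) = a ^ i" for a :: 'a and i
    by (induction i) (simp_all add: R_def nat_pow_def mult.commute)
  have fin: "finite (carrier R)" by (simp add: R_def)
  obtain a where a: "a \<in> carrier (mult_of R)" "carrier (mult_of R) = {a[^]\<^bsub>R\<^esub>i | i::nat . i \<in> UNIV}"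
    using field.finite_field_mult_group_has_gen[OF fl fin] ..
  have pw2: "a [^]\<^bsub>mult_of R\<^esub> (i::nat) = a ^ i" for i
    using pw[of a i] by (simp add: nat_pow_def mult_of_def)
  have c: "carrier (mult_of R) = UNIV - {0}" by (simp add: R_def mult_of_def)
  have a0: "a \<noteq> 0" using a(1) c by blast
  have "\<exists>i::nat. x = a ^ i" if "x \<noteq> 0" for x
  proof -
    have "x \<in> carrier (mult_of R)" using c that by blast
    then obtain i :: nat where "x = a[^]\<^bsub>R\<^esub>i" using a(2) by blast
    then show ?thesis using pw by metis
  qed
  then show ?thesis using a0 by blast
qed


locale skewaut =
  fixes \<sigma> :: "'a::field \<Rightarrow> 'a"
  assumes s_add: "\<sigma> (x + y) = \<sigma> x + \<sigma> y"
    and s_mult: "\<sigma> (x * y) = \<sigma> x * \<sigma> y"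
    and s_one: "\<sigma> 1 = 1"
    and s_inj: "inj \<sigma>"
begin

lemma s_zero: "\<sigma> 0 = 0"
  using s_add[of 0 0] by (metis add.right_neutral add_left_cancel)

lemma sp_add: "(\<sigma>^^i) (x + y) = (\<sigma>^^i) x + (\<sigma>^^i) y"
  by (induction i) (simp_all add: s_add)
lemma sp_mult: "(\<sigma>^^i) (x * y) = (\<sigma>^^i) x * (\<sigma>^^i) y"
  by (induction i) (simp_all add: s_mult)
lemma sp_one[simp]: "(\<sigma>^^i) 1 = 1"
  by (induction i) (simp_all add: s_one)
lemma sp_zero[simp]: "(\<sigma>^^i) 0 = 0"
  by (induction i) (simp_all add: s_zero)
lemma sp_inj: "inj (\<sigma>^^i)"
  by (rule inj_fn) (rule s_inj)
lemma sp_eq0[simp]: "(\<sigma>^^i) x = 0 \<longleftrightarrow> x = 0"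
  using sp_inj[of i] by (metis injD sp_zero)
lemma sp_minus: "(\<sigma>^^i) (- x) = - (\<sigma>^^i) x"
  using sp_add[of i x "-x"] by (simp add: eq_neg_iff_add_eq_0 add.commute)
lemma sp_diff: "(\<sigma>^^i) (x - y) = (\<sigma>^^i) x - (\<sigma>^^i) y"
  using sp_add[of i x "-y"] sp_minus[of i y] by simp
lemma sp_comp: "(\<sigma>^^i) ((\<sigma>^^j) x) = (\<sigma>^^(i+j)) x"
  by (simp add: funpow_add)
lemma sp_inverse: "(\<sigma>^^i) (inverse x) = inverse ((\<sigma>^^i) x)"
proof (cases "x = 0")
  case False
  then have "(\<sigma>^^i) x * (\<sigma>^^i) (inverse x) = 1" by (simp flip: sp_mult)
  then show ?thesis by (metis inverse_unique)
qed simp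

abbreviation sm where "sm \<equiv> skew_mult \<sigma>"

lemma sm_expand:
  assumes "degree p \<le> N" "degree q \<le> M"
  shows "sm p q = (\<Sum>i\<le>N. \<Sum>j\<le>M. monom (coeff p i * (\<sigma>^^i) (coeff q j)) (i+j))"
proof -
  have "(\<Sum>i\<le>N. \<Sum>j\<le>M. monom (coeff p i * (\<sigma>^^i) (coeff q j)) (i+j))
      = (\<Sum>i\<le>degree p. \<Sum>j\<le>M. monom (coeff p i * (\<sigma>^^i) (coeff q j)) (i+j))"
    by (rule sum.mono_neutral_right) (use assms in \<open>auto simp: coeff_eq_0\<close>)
  also have "\<dots> = (\<Sum>i\<le>degree p. \<Sum>j\<le>degree q. monom (coeff p i * (\<sigma>^^i) (coeff q j)) (i+j))"
    by (rule sum.cong[OF refl], rule sum.mono_neutral_right) (use assms in \<open>auto simp: coeff_eq_0\<close>)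
  finally show ?thesis by (simp add: skew_mult_def)
qed

lemma sm_coeff:
  assumes "degree p \<le> N" "degree q \<le> M"
  shows "coeff (sm p q) k = (\<Sum>i\<le>N. \<Sum>j\<le>M. if i + j = k then coeff p i * (\<sigma>^^i) (coeff q j) else 0)"
  by (simp add: sm_expand[OF assms] coeff_sum coeff_monom)

lemma sm_monom: "sm (monom a i) (monom b j) = monom (a * (\<sigma>^^i) b) (i+j)"
proof -
  have e: "\<And>i' j'. monom ((if i = i' then a else 0) * (\<sigma>^^i') (if j = j' then b else 0)) (i'+j') = (if j = j' then (if i = i' then monom (a*(\<sigma>^^i) b) (i+j) else 0) else 0)"
    by auto
  have "sm (monom a i) (monom b j) = (\<Sum>i'\<le>i. \<Sum>j'\<le>j. monom (coeff (monom a i) i' * (\<sigma>^^i') (coeff (monom b j) j')) (i'+j'))"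
    by (rule sm_expand) (simp_all add: degree_monom_le)
  also have "\<dots> = monom (a * (\<sigma>^^i) b) (i+j)"
    by (simp add: coeff_monom e)
  finally show ?thesis .
qed

lemma sm_add_left: "sm (p1 + p2) q = sm p1 q + sm p2 q"
proof -
  define N where "N = max (degree p1) (degree p2)"
  have d: "degree p1 \<le> N" "degree p2 \<le> N" "degree (p1 + p2) \<le> N"
    by (auto simp: N_def intro: degree_add_le)
  show ?thesis
    by (simp add: sm_expand[OF d(1) order.refl] sm_expand[OF d(2) order.refl] sm_expand[OF d(3) order.refl]
        distrib_right sum.distrib flip: add_monom)
qed

lemma sm_add_right: "sm p (q1 + q2) = sm p q1 + sm p q2"
proof -
  define N where "N = max (degree q1) (degree q2)"
  have d: "degree q1 \<le> N" "degree q2 \<le> N" "degree (q1 + q2) \<le> N"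
    by (auto simp: N_def intro: degree_add_le)
  show ?thesis
    by (simp add: sm_expand[OF order.refl d(1)] sm_expand[OF order.refl d(2)] sm_expand[OF order.refl d(3)]
        sp_add distrib_left sum.distrib flip: add_monom)
qed

lemma sm_0_left[simp]: "sm 0 q = 0"
  by (simp add: skew_mult_def)
lemma sm_0_right[simp]: "sm p 0 = 0"
  by (simp add: skew_mult_def)

lemma sm_minus_left: "sm (- p) q = - sm p q"
  using sm_add_left[of "-p" p q] by (simp add: eq_neg_iff_add_eq_0)
lemma sm_minus_right: "sm p (- q) = - sm p q"
  using sm_add_right[of p "-q" q] by (simp add: eq_neg_iff_add_eq_0)
lemma sm_diff_left: "sm (p1 - p2) q = sm p1 q - sm p2 q"
  using sm_add_left[of p1 "-p2" q] sm_minus_left[of p2 q] by simp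
lemma sm_diff_right: "sm p (q1 - q2) = sm p q1 - sm p q2"
  using sm_add_right[of p q1 "-q2"] sm_minus_right[of p q2] by simp

lemma sm_sum_left: "sm (\<Sum>x\<in>A. P x) q = (\<Sum>x\<in>A. sm (P x) q)"
  by (induction A rule: infinite_finite_induct) (simp_all add: sm_add_left)
lemma sm_sum_right: "sm p (\<Sum>x\<in>A. P x) = (\<Sum>x\<in>A. sm p (P x))"
  by (induction A rule: infinite_finite_induct) (simp_all add: sm_add_right)

lemma sm_assoc_m3: "sm (sm (monom a i) (monom b j)) (monom c k) = sm (monom a i) (sm (monom b j) (monom c k))"
  by (simp add: sm_monom sp_mult sp_comp mult.assoc add_ac)

lemma sm_assoc_m2: "sm (sm (monom a i) (monom b j)) r = sm (monom a i) (sm (monom b j) r)"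
proof -
  have "sm (sm (monom a i) (monom b j)) r = sm (sm (monom a i) (monom b j)) (\<Sum>k\<le>degree r. monom (coeff r k) k)"
    by (simp only: poly_as_sum_of_monoms)
  also have "\<dots> = sm (monom a i) (sm (monom b j) (\<Sum>k\<le>degree r. monom (coeff r k) k))"
    by (simp only: sm_sum_right sm_assoc_m3)
  finally show ?thesis by (simp only: poly_as_sum_of_monoms)
qed

lemma sm_assoc_m1: "sm (sm (monom a i) q) r = sm (monom a i) (sm q r)"
proof -
  have "sm (sm (monom a i) q) r = sm (sm (monom a i) (\<Sum>k\<le>degree q. monom (coeff q k) k)) r"
    by (simp only: poly_as_sum_of_monoms)
  also have "\<dots> = sm (monom a i) (sm (\<Sum>k\<le>degree q. monom (coeff q k) k) r)"
    by (simp only: sm_sum_right sm_sum_left sm_assoc_m2)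
  finally show ?thesis by (simp only: poly_as_sum_of_monoms)
qed

lemma sm_assoc: "sm (sm p q) r = sm p (sm q r)"
proof -
  have "sm (sm p q) r = sm (sm (\<Sum>k\<le>degree p. monom (coeff p k) k) q) r"
    by (simp only: poly_as_sum_of_monoms)
  also have "\<dots> = sm (\<Sum>k\<le>degree p. monom (coeff p k) k) (sm q r)"
    by (simp only: sm_sum_left sm_assoc_m1)
  finally show ?thesis by (simp only: poly_as_sum_of_monoms)
qed

lemma smult_sum_right: "smult c (\<Sum>x\<in>A. P x) = (\<Sum>x\<in>A. smult c (P x))"
  by (induction A rule: infinite_finite_induct) (simp_all add: smult_add_right)

lemma sm_const_left: "sm [:c:] p = smult c p"
proof -
  have "sm [:c:] p = sm (monom c 0) (\<Sum>j\<le>degree p. monom (coeff p j) j)"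
    by (simp only: poly_as_sum_of_monoms monom_0)
  also have "\<dots> = (\<Sum>j\<le>degree p. smult c (monom (coeff p j) j))"
    by (simp add: sm_sum_right sm_monom smult_monom)
  also have "\<dots> = smult c p"
    by (simp flip: smult_sum_right add: poly_as_sum_of_monoms)
  finally show ?thesis .
qed

lemma sm_one_left[simp]: "sm 1 p = p"
  using sm_const_left[of 1 p] by (simp add: one_pCons)

lemma sm_const_right: "sm p [:c:] = (\<Sum>i\<le>degree p. monom (coeff p i * (\<sigma>^^i) c) i)"
proof -
  have "sm p [:c:] = sm (\<Sum>i\<le>degree p. monom (coeff p i) i) (monom c 0)"
    by (simp only: poly_as_sum_of_monoms monom_0)
  also have "\<dots> = (\<Sum>i\<le>degree p. monom (coeff p i * (\<sigma>^^i) c) i)"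
    by (simp add: sm_sum_left sm_monom)
  finally show ?thesis .
qed

lemma sm_one_right[simp]: "sm p 1 = p"
  using sm_const_right[of p 1] by (simp add: one_pCons poly_as_sum_of_monoms)

lemma coeff_sm_const_right: "coeff (sm p [:c:]) i = coeff p i * (\<sigma>^^i) c"
  by (auto simp: sm_const_right coeff_sum coeff_monom coeff_eq_0 not_le)

lemma sm_lead:
  assumes "p \<noteq> 0" "q \<noteq> 0"
  shows "coeff (sm p q) (degree p + degree q) = lead_coeff p * (\<sigma>^^degree p) (lead_coeff q)"
    and "degree (sm p q) = degree p + degree q"
    and "sm p q \<noteq> 0"
proof -
  have c: "coeff (sm p q) k = (\<Sum>i\<le>degree p. \<Sum>j\<le>degree q. if i + j = k then coeff p i * (\<sigma>^^i) (coeff q j) else 0)" for k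
    by (rule sm_coeff) auto
  have "coeff (sm p q) (degree p + degree q) = (\<Sum>i\<le>degree p. \<Sum>j\<le>degree q. if degree q = j then (if degree p = i then lead_coeff p * (\<sigma>^^degree p) (lead_coeff q) else 0) else 0)"
    unfolding c by (intro sum.cong refl) auto
  also have "\<dots> = lead_coeff p * (\<sigma>^^degree p) (lead_coeff q)" by simp
  finally show 1: "coeff (sm p q) (degree p + degree q) = lead_coeff p * (\<sigma>^^degree p) (lead_coeff q)" .
  have nz: "coeff (sm p q) (degree p + degree q) \<noteq> 0" using 1 assms by simp
  have "\<forall>k>degree p + degree q. coeff (sm p q) k = 0"
    unfolding c by (auto intro!: sum.neutral)
  then have "degree (sm p q) \<le> degree p + degree q" by (rule degree_le)
  moreover have "degree p + degree q \<le> degree (sm p q)" using nz by (rule le_degree)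
  ultimately show "degree (sm p q) = degree p + degree q" by simp
  show "sm p q \<noteq> 0" using nz by auto
qed

lemma sm_eq0: "sm p q = 0 \<longleftrightarrow> p = 0 \<or> q = 0"
  using sm_lead(3) by auto

lemma ab_swap: "a + b = c + d \<Longrightarrow> a - c = d - (b::'b::ab_group_add)"
  by (simp add: algebra_simps)

lemma ab_swap2: "a - b = c + d \<Longrightarrow> a = (c + b) + (d::'b::ab_group_add)"
  by (simp add: algebra_simps)

lemma sm_div:
  assumes u: "u \<noteq> 0"
  shows "\<exists>Q r. p = sm Q u + r \<and> (r = 0 \<or> degree r < degree u)"
proof (induction "degree p" arbitrary: p rule: less_induct)
  case less
  show ?case
  proof (cases "p = 0 \<or> degree p < degree u")
    case True
    then show ?thesis by (intro exI[of _ 0] exI[of _ p]) auto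
  next
    case False
    then have p0: "p \<noteq> 0" and dle: "degree u \<le> degree p" by auto
    define e where "e = degree p - degree u"
    define c where "c = lead_coeff p / (\<sigma>^^e) (lead_coeff u)"
    have c0: "c \<noteq> 0" using p0 u by (simp add: c_def)
    define m where "m = sm (monom c e) u"
    have mon0: "monom c e \<noteq> 0" using c0 by simp
    have dm: "degree m = degree p"
      using sm_lead(2)[OF mon0 u] dle by (simp add: m_def degree_monom_eq[OF c0] e_def)
    have "coeff m (e + degree u) = c * (\<sigma>^^e) (lead_coeff u)"
      using sm_lead(1)[OF mon0 u] by (simp add: m_def degree_monom_eq[OF c0])
    then have cm: "coeff m (degree p) = lead_coeff p"
      using dle u by (simp add: e_def c_def)
    define p' where "p' = p - m"
    show ?thesis
    proof (cases "p' = 0")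
      case True
      then show ?thesis
        by (intro exI[of _ "monom c e"] exI[of _ 0]) (simp add: p'_def m_def)
    next
      case False
      have "degree p' \<le> degree p" unfolding p'_def using degree_diff_le[of p "degree p" m] dm by simp
      moreover have "coeff p' (degree p) = 0" by (simp add: p'_def cm)
      ultimately have "degree p' < degree p"
      proof -
        assume a1: "degree p' \<le> degree p" and a2: "coeff p' (degree p) = 0"
        show ?thesis
        proof (rule ccontr)
          assume "\<not> degree p' < degree p"
          then have "degree p' = degree p" using a1 by simp
          then have "lead_coeff p' = 0" using a2 by simp
          then show False using False by simp
        qed
      qed
      from less[OF this] obtain Q r where "p' = sm Q u + r" "r = 0 \<or> degree r < degree u" by blast
      then have "p = sm (Q + monom c e) u + r"
        using ab_swap2[of p m "sm Q u" r] unfolding sm_add_left p'_def m_def by simp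
      then show ?thesis using \<open>r = 0 \<or> degree r < degree u\<close> by blast
    qed
  qed
qed

lemma sm_div_unique:
  assumes u: "u \<noteq> 0" and eq: "sm Q1 u + r1 = sm Q2 u + r2"
    and d1: "degree r1 < degree u" and d2: "degree r2 < degree u"
  shows "Q1 = Q2 \<and> r1 = r2"
proof -
  have e: "sm (Q1 - Q2) u = r2 - r1" using ab_swap[OF eq] by (simp add: sm_diff_left)
  have "Q1 = Q2"
  proof (rule ccontr)
    assume "Q1 \<noteq> Q2"
    then have "Q1 - Q2 \<noteq> 0" by simp
    then have "degree (sm (Q1 - Q2) u) \<ge> degree u" using sm_lead(2)[OF _ u] by simp
    moreover have "degree (r2 - r1) < degree u"
      using d1 d2 degree_diff_le_max[of r2 r1] by simp
    ultimately show False using e by simp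
  qed
  then show ?thesis using eq by (metis add_left_cancel)
qed

lemma ideal_gen:
  assumes sub: "\<And>a b. a \<in> I \<Longrightarrow> b \<in> I \<Longrightarrow> a - b \<in> I"
    and lm: "\<And>h a. a \<in> I \<Longrightarrow> sm h a \<in> I"
    and x: "x \<in> I" "x \<noteq> 0"
  shows "\<exists>u\<in>I. u \<noteq> 0 \<and> degree u \<le> degree x \<and> (\<forall>h\<in>I. \<exists>Q. h = sm Q u)"
proof -
  obtain u where u: "u \<in> I \<and> u \<noteq> 0" and mn: "\<forall>y. y \<in> I \<and> y \<noteq> 0 \<longrightarrow> degree u \<le> degree y"
    using ex_has_least_nat[of "\<lambda>y. y \<in> I \<and> y \<noteq> 0" x degree] x by blast
  have "\<exists>Q. h = sm Q u" if h: "h \<in> I" for h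
  proof -
    obtain Q r where qr: "h = sm Q u + r" "r = 0 \<or> degree r < degree u" using sm_div u by blast
    have "sm Q u \<in> I" using lm u by blast
    then have "h - sm Q u \<in> I" using sub h by blast
    then have rI: "r \<in> I" using qr(1) by simp
    have "r = 0"
    proof (rule ccontr)
      assume "r \<noteq> 0"
      then show False using mn rI qr(2) by fastforce
    qed
    then show ?thesis using qr(1) by auto
  qed
  then show ?thesis using u mn x by blast
qed

lemma finite_deg_less:
  assumes "finite (UNIV :: 'a set)"
  shows "finite {p :: 'a poly. degree p < n}"
proof -
  have "{p :: 'a poly. degree p < n} \<subseteq> Poly ` {xs. set xs \<subseteq> UNIV \<and> length xs \<le> n}"
  proof
    fix p :: "'a poly" assume "p \<in> {p. degree p < n}"
    then have "length (coeffs p) \<le> n"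
      by (cases "p = 0") (auto simp: length_coeffs_degree)
    then show "p \<in> Poly ` {xs. set xs \<subseteq> UNIV \<and> length xs \<le> n}"
      by (metis (mono_tags, lifting) Poly_coeffs image_iff mem_Collect_eq top_greatest)
  qed
  moreover have "finite {xs :: 'a list. set xs \<subseteq> UNIV \<and> length xs \<le> n}"
    by (rule finite_lists_length_le[OF assms])
  ultimately show ?thesis by (meson finite_imageI finite_subset)
qed

end

locale skewf = skewaut \<sigma> for \<sigma> :: "'a::field \<Rightarrow> 'a" +
  fixes f :: "'a poly"
  assumes f_deg: "degree f \<ge> 1"
begin

lemma f0: "f \<noteq> 0" using f_deg by auto

abbreviation rmod where "rmod \<equiv> skew_rmod \<sigma> f"
abbreviation smul (infixl "\<circ>\<^sub>f" 70) where "x \<circ>\<^sub>f y \<equiv> sf_mult \<sigma> f x y"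
definition inRf where "inRf p \<longleftrightarrow> (\<exists>Q. p = sm Q f)"

lemma rmod_unique:
  assumes d: "degree r < degree f" and p: "p = sm Q f + r"
  shows "rmod p = r"
  unfolding skew_rmod_def
proof (rule the_equality)
  show "degree r < degree f \<and> (\<exists>g. p = sm g f + r)" using d p by blast
  fix r' assume r': "degree r' < degree f \<and> (\<exists>g. p = sm g f + r')"
  then obtain g where g: "p = sm g f + r'" by blast
  have "sm g f + r' = sm Q f + r" using g p by simp
  from sm_div_unique[OF f0 this] r' d show "r' = r" by blast
qed

lemma rmod_ex: "degree (rmod p) < degree f \<and> (\<exists>Q. p = sm Q f + rmod p)"
proof -
  obtain Q r where qr: "p = sm Q f + r" "r = 0 \<or> degree r < degree f" using sm_div[OF f0] by blast
  then have d: "degree r < degree f" using f_deg by auto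
  have "rmod p = r" by (rule rmod_unique[OF d qr(1)])
  then show ?thesis using d qr(1) by blast
qed

lemma rmod_deg: "degree (rmod p) < degree f" using rmod_ex by blast

lemma rmod_small: "degree p < degree f \<Longrightarrow> rmod p = p"
  using rmod_unique[of p p 0] by simp

lemma sm_smult_left: "sm (smult c p) q = smult c (sm p q)"
  by (metis sm_assoc sm_const_left)

lemma rmod_shift: "rmod (sm Q f + p) = rmod p"
proof -
  obtain Q' where q: "p = sm Q' f + rmod p" using rmod_ex by blast
  have "sm Q f + p = sm (Q + Q') f + rmod p" by (subst q) (simp add: sm_add_left add.assoc)
  then show ?thesis using rmod_unique[OF rmod_deg] by blast
qed

lemma rmod_diff: "rmod (p - q) = rmod p - rmod q"
proof -
  obtain Q1 where 1: "p = sm Q1 f + rmod p" using rmod_ex by blast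
  obtain Q2 where 2: "q = sm Q2 f + rmod q" using rmod_ex by blast
  have "p - q = sm (Q1 - Q2) f + (rmod p - rmod q)"
    by (subst 1, subst 2) (simp add: sm_diff_left)
  moreover have "degree (rmod p - rmod q) < degree f"
    using rmod_deg[of p] rmod_deg[of q] degree_diff_le_max[of "rmod p" "rmod q"] by simp
  ultimately show ?thesis using rmod_unique by blast
qed

lemma rmod_0_iff: "rmod p = 0 \<longleftrightarrow> inRf p"
proof
  assume "rmod p = 0" then show "inRf p" using rmod_ex[of p] unfolding inRf_def by simp
next
  assume "inRf p" then obtain Q where "p = sm Q f" unfolding inRf_def by blast
  then show "rmod p = 0" using rmod_unique[of 0 p Q] f_deg by simp
qed

lemma rmod_add: "rmod (p + q) = rmod p + rmod q"
  using rmod_diff[of p "-q"] rmod_diff[of 0 q] rmod_small[of 0] f_deg by simp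

lemma inRf_diff: "inRf p \<Longrightarrow> inRf q \<Longrightarrow> inRf (p - q)"
  unfolding inRf_def by (metis sm_diff_left)
lemma inRf_add: "inRf p \<Longrightarrow> inRf q \<Longrightarrow> inRf (p + q)"
  unfolding inRf_def by (metis sm_add_left)
lemma inRf_left: "inRf p \<Longrightarrow> inRf (sm h p)"
  unfolding inRf_def by (metis sm_assoc)
lemma inRf_f: "inRf (sm Q f)"
  unfolding inRf_def by blast

lemma rmod_inRf: "inRf q \<Longrightarrow> rmod (p + q) = rmod p"
  unfolding inRf_def using rmod_shift by (metis add.commute)

lemma rmod_const: "rmod (sm [:c:] p) = smult c (rmod p)"
proof -
  obtain Q where 1: "p = sm Q f + rmod p" using rmod_ex by blast
  have "sm [:c:] p = sm (sm [:c:] Q) f + smult c (rmod p)"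
    by (subst 1) (simp add: sm_add_right sm_const_left sm_smult_left)
  moreover have "degree (smult c (rmod p)) < degree f" using rmod_deg by (meson degree_smult_le le_less_trans)
  ultimately show ?thesis using rmod_unique by blast
qed

end
locale skewfi = skewf \<sigma> f for \<sigma> :: "'a::field \<Rightarrow> 'a" and f +
  assumes irr: "skew_irreducible \<sigma> f" and finK: "finite (UNIV :: 'a set)"
begin

lemma no_zero_div:
  assumes x: "x \<noteq> 0" "degree x < degree f" and y: "y \<noteq> 0" "degree y < degree f"
  shows "\<not> inRf (sm x y)"
proof
  assume xy: "inRf (sm x y)"
  define I1 where "I1 = {sm a y + sm b f | a b. True}"
  have yI: "y \<in> I1" unfolding I1_def by (rule CollectI, rule exI[of _ 1], rule exI[of _ 0]) simp
  have fI: "f \<in> I1" unfolding I1_def by (rule CollectI, rule exI[of _ 0], rule exI[of _ 1]) simp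
  have sub1: "a - b \<in> I1" if ab1: "a \<in> I1" "b \<in> I1" for a b
  proof -
    obtain a1 a2 where a: "a = sm a1 y + sm a2 f" using ab1(1) unfolding I1_def by blast
    obtain b1 b2 where b: "b = sm b1 y + sm b2 f" using ab1(2) unfolding I1_def by blast
    have "a - b = sm (a1 - b1) y + sm (a2 - b2) f" unfolding a b sm_diff_left by simp
    then show ?thesis unfolding I1_def by blast
  qed
  have lm1: "sm h a \<in> I1" if a1: "a \<in> I1" for h a
  proof -
    obtain a1 a2 where a: "a = sm a1 y + sm a2 f" using a1 unfolding I1_def by blast
    have "sm h a = sm (sm h a1) y + sm (sm h a2) f" unfolding a by (simp add: sm_add_right sm_assoc)
    then show ?thesis unfolding I1_def by blast
  qed
  obtain d where d: "d \<in> I1" "d \<noteq> 0" "degree d \<le> degree y" and dgen: "\<forall>h\<in>I1. \<exists>Q. h = sm Q d"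
    using ideal_gen[of I1 y, OF sub1 lm1 yI y(1)] by blast
  obtain v where v: "f = sm v d" using dgen fI by blast
  have v0: "v \<noteq> 0" using v f0 by auto
  have dfv: "degree f = degree v + degree d" using v sm_lead(2)[OF v0 d(2)] by simp
  have dd0: "degree d = 0"
  proof (rule ccontr)
    assume "degree d \<noteq> 0"
    then have "degree v < degree f" "degree d < degree f" using dfv d(3) y(2) by auto
    then show False using irr v unfolding skew_irreducible_def by blast
  qed
  define c where "c = coeff d 0"
  have dc: "d = [:c:]" using dd0 by (simp add: c_def degree_0_id)
  have c0: "c \<noteq> 0" using dc d(2) by auto
  have "sm [:inverse c:] d \<in> I1" using lm1 d(1) by blast
  moreover have "sm [:inverse c:] d = 1" using c0 by (simp add: dc sm_const_left one_pCons)
  ultimately have "1 \<in> I1" by simp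
  then obtain a b where ab: "1 = sm a y + sm b f" unfolding I1_def by blast
  have ay: "sm a y = 1 - sm b f" using ab by (metis add_diff_cancel_right')
  define J where "J = {h. inRf (sm h y)}"
  have subJ: "a - b \<in> J" if "a \<in> J" "b \<in> J" for a b
    using that unfolding J_def by (simp add: sm_diff_left inRf_diff)
  have lmJ: "sm h a \<in> J" if "a \<in> J" for h a
    using that unfolding J_def by (simp add: sm_assoc inRf_left)
  have xJ: "x \<in> J" using xy by (simp add: J_def)
  obtain u where u: "u \<in> J" "u \<noteq> 0" "degree u \<le> degree x"
    using ideal_gen[of J x, OF subJ lmJ xJ x(1)] by blast
  obtain w where uy: "sm u y = sm w f" using u(1) unfolding J_def inRf_def by blast
  define D where "D = {p :: 'a poly. p = 0 \<or> degree p < degree u}"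
  define S where "S = {p :: 'a poly. degree p < degree f}"
  have surj: "S \<subseteq> (\<lambda>p. rmod (sm p y)) ` D"
  proof
    fix c assume c: "c \<in> S"
    obtain Q p where qp: "sm c a = sm Q u + p" "p = 0 \<or> degree p < degree u" using sm_div[OF u(2)] by blast
    have pe: "p = sm c a - sm Q u" using qp(1) by simp
    have "sm p y = sm c (sm a y) - sm Q (sm u y)" unfolding pe sm_diff_left sm_assoc ..
    also have "\<dots> = sm c (1 - sm b f) - sm Q (sm w f)" using ay uy by simp
    also have "\<dots> = c - sm (sm c b + sm Q w) f" by (simp add: sm_diff_right sm_add_left sm_assoc algebra_simps)
    finally have "rmod (sm p y) = rmod c - rmod (sm (sm c b + sm Q w) f)" by (simp add: rmod_diff)
    also have "\<dots> = c" using c rmod_small rmod_0_iff inRf_f unfolding S_def by simp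
    finally show "c \<in> (\<lambda>p. rmod (sm p y)) ` D" using qp(2) unfolding D_def by force
  qed
  have finS: "finite S" unfolding S_def by (rule finite_deg_less[OF finK])
  have DS: "D \<subseteq> S" using u(3) x(2) f_deg unfolding D_def S_def by auto
  have "monom 1 (degree f - 1) \<in> S - D"
    using u(3) x(2) f_deg unfolding D_def S_def by (auto simp: degree_monom_eq)
  then have "D \<subset> S" using DS by blast
  then have "card D < card S" using finS by (simp add: psubset_card_mono)
  moreover have "card S \<le> card D"
    using card_mono[OF finite_imageI[OF finite_subset[OF DS finS]] surj] card_image_le[OF finite_subset[OF DS finS], of "\<lambda>p. rmod (sm p y)"]
    by linarith
  ultimately show False by simp
qed

lemma no_zero_div':
  assumes x: "x \<noteq> 0" "degree x < degree f" and xz: "inRf (sm x z)"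
  shows "inRf z"
proof -
  obtain Q where z: "z = sm Q f + rmod z" using rmod_ex by blast
  have "sm x z = sm (sm x Q) f + sm x (rmod z)" by (subst z) (simp add: sm_add_right sm_assoc)
  then have "sm x (rmod z) = sm x z - sm (sm x Q) f" by simp
  then have "inRf (sm x (rmod z))" using xz inRf_f inRf_diff by simp
  then have "rmod z = 0" using no_zero_div[OF x _ rmod_deg] by blast
  then show ?thesis using rmod_0_iff by simp
qed

lemma Lf_closed: "x \<in> Lf f \<Longrightarrow> y \<in> Lf f \<Longrightarrow> x \<circ>\<^sub>f y \<in> Lf f"
  unfolding Lf_def sf_mult_def using no_zero_div rmod_0_iff rmod_deg by auto

definition LN where "LN g \<longleftrightarrow> (\<forall>x\<in>Lf f. \<forall>y\<in>Lf f. (g \<circ>\<^sub>f x) \<circ>\<^sub>f y = g \<circ>\<^sub>f (x \<circ>\<^sub>f y))"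

lemma rmod_rmod: "rmod (rmod p) = rmod p"
  by (rule rmod_small[OF rmod_deg])

lemma rmod_left: "rmod (sm g (rmod p)) = rmod (sm g p)"
proof -
  obtain Q where q: "p = sm Q f + rmod p" using rmod_ex by blast
  have "sm g p = sm (sm g Q) f + sm g (rmod p)" by (subst q) (simp add: sm_add_right sm_assoc)
  then show ?thesis by (simp add: rmod_shift)
qed

lemma rmod_smult: "rmod (smult c p) = smult c (rmod p)"
  using rmod_const[of c p] by (simp add: sm_const_left)

lemma const_LN: "LN [:c:]"
  unfolding LN_def sf_mult_def
proof (intro ballI)
  fix x y assume "x \<in> Lf f"
  then have "rmod x = x" using rmod_small by (simp add: Lf_def)
  then show "rmod (sm (rmod (sm [:c:] x)) y) = rmod (sm [:c:] (rmod (sm x y)))"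
    by (simp add: rmod_smult sm_smult_left rmod_rmod sm_const_left)
qed

lemma LN_deg0:
  assumes g: "g \<in> Lf f" and ln: "LN g" and nri: "\<not> right_invariant \<sigma> f"
  shows "degree g = 0"
proof (rule ccontr)
  assume dg: "degree g \<noteq> 0"
  have g0: "g \<noteq> 0" and dgf: "degree g < degree f" using g by (auto simp: Lf_def)
  define x where "x = (monom 1 (degree f - 1) :: 'a poly)"
  have x0: "x \<noteq> 0" and dx: "degree x = degree f - 1" by (simp_all add: x_def degree_monom_eq)
  have xL: "x \<in> Lf f" using x0 dx f_deg by (simp add: Lf_def)
  obtain P where gx: "sm g x = sm P f + rmod (sm g x)" using rmod_ex by blast
  have dgx: "degree (sm g x) = degree g + (degree f - 1)" using sm_lead(2)[OF g0 x0] dx by simp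
  have P0: "P \<noteq> 0"
  proof
    assume "P = 0"
    then have "sm g x = rmod (sm g x)" using gx by simp
    then have "degree (sm g x) < degree f" using rmod_deg by metis
    then show False using dgx dg by simp
  qed
  have "sm P f = sm g x - rmod (sm g x)" using gx by (simp add: eq_diff_eq)
  then have "degree (sm P f) \<le> max (degree (sm g x)) (degree (rmod (sm g x)))"
    using degree_diff_le_max by metis
  then have "degree P + degree f \<le> max (degree g + (degree f - 1)) (degree (rmod (sm g x)))"
    using sm_lead(2)[OF P0 f0] dgx by simp
  then have dP: "degree P < degree f" using rmod_deg[of "sm g x"] dgf f_deg by simp
  have fy: "inRf (sm f y)" if yL: "y \<in> Lf f" for y
  proof -
    have eq: "(g \<circ>\<^sub>f x) \<circ>\<^sub>f y = g \<circ>\<^sub>f (x \<circ>\<^sub>f y)" using ln xL yL unfolding LN_def by blast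
    have r: "rmod (sm g x) = sm g x - sm P f" using gx by (metis add_diff_cancel_left')
    have "(g \<circ>\<^sub>f x) \<circ>\<^sub>f y = rmod (sm g (sm x y)) - rmod (sm P (sm f y))"
      unfolding sf_mult_def r by (simp add: sm_diff_left sm_assoc rmod_diff)
    moreover have "g \<circ>\<^sub>f (x \<circ>\<^sub>f y) = rmod (sm g (sm x y))"
      unfolding sf_mult_def by (simp add: rmod_left)
    ultimately have "rmod (sm P (sm f y)) = 0" using eq by simp
    then have "inRf (sm P (sm f y))" using rmod_0_iff by simp
    then show ?thesis using no_zero_div'[OF P0 dP] by blast
  qed
  have fz: "inRf (sm f z)" for z
  proof -
    obtain Q where z: "z = sm Q f + rmod z" using rmod_ex by blast
    have e: "sm f z = sm (sm f Q) f + sm f (rmod z)" by (subst z) (simp add: sm_add_right sm_assoc)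
    show ?thesis
    proof (cases "rmod z = 0")
      case True
      then show ?thesis using e inRf_f by simp
    next
      case False
      then have "rmod z \<in> Lf f" using rmod_deg by (simp add: Lf_def)
      then show ?thesis using e fy inRf_f inRf_add by simp
    qed
  qed
  have "right_invariant \<sigma> f"
    unfolding right_invariant_def
  proof (intro allI)
    fix g' h
    obtain Q where "sm f g' = sm Q f" using fz[of g'] unfolding inRf_def by blast
    then have "sm (sm h f) g' = sm (sm h Q) f" by (simp add: sm_assoc)
    then show "\<exists>h'. sm (sm h f) g' = sm h' f" by blast
  qed
  then show False using nri by simp
qed

lemma LN_iff:
  assumes g: "g \<in> Lf f" and nri: "\<not> right_invariant \<sigma> f"
  shows "LN g \<longleftrightarrow> degree g = 0"
  using LN_deg0[OF g _ nri] const_LN by (metis degree_0_id)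

lemma H_LN:
  assumes H: "loop_automorphism \<sigma> f H" and g: "g \<in> Lf f" and ln: "LN g"
  shows "LN (H g)"
  unfolding LN_def
proof (intro ballI)
  fix x y assume x: "x \<in> Lf f" and y: "y \<in> Lf f"
  have bij: "bij_betw H (Lf f) (Lf f)" and hm: "\<forall>x\<in>Lf f. \<forall>y\<in>Lf f. H (x \<circ>\<^sub>f y) = H x \<circ>\<^sub>f H y"
    using H unfolding loop_automorphism_def by auto
  obtain x' where x': "x' \<in> Lf f" "x = H x'" using x bij by (metis bij_betw_def imageE)
  obtain y' where y': "y' \<in> Lf f" "y = H y'" using y bij by (metis bij_betw_def imageE)
  have "(H g \<circ>\<^sub>f x) \<circ>\<^sub>f y = H ((g \<circ>\<^sub>f x') \<circ>\<^sub>f y')"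
    using hm g x' y' Lf_closed by simp
  also have "\<dots> = H (g \<circ>\<^sub>f (x' \<circ>\<^sub>f y'))" using ln x'(1) y'(1) unfolding LN_def by simp
  also have "\<dots> = H g \<circ>\<^sub>f (x \<circ>\<^sub>f y)" using hm g x' y' Lf_closed by simp
  finally show "(H g \<circ>\<^sub>f x) \<circ>\<^sub>f y = H g \<circ>\<^sub>f (x \<circ>\<^sub>f y)" .
qed

end



context skewaut
begin

lemma sp_prod: "(\<sigma>^^j) (\<Prod>l\<in>A. g l) = (\<Prod>l\<in>A. (\<sigma>^^j) (g l))"
  by (induction A rule: infinite_finite_induct) (simp_all add: sp_mult)

lemma s_power: "\<sigma> (x ^ e) = (\<sigma> x) ^ e"
  by (induction e) (simp_all add: s_mult s_one)

lemma prod_shift: "k * \<sigma> (\<Prod>l<i. (\<sigma>^^l) k) = (\<Prod>l<Suc i. (\<sigma>^^l) k)"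
proof -
  have "\<sigma> (\<Prod>l<i. (\<sigma>^^l) k) = (\<Prod>l<i. (\<sigma>^^Suc l) k)"
    using sp_prod[of 1 "\<lambda>l. (\<sigma>^^l) k" "{..<i}"] by simp
  moreover have "(\<Prod>l<Suc i. (\<sigma>^^l) k) = k * (\<Prod>l<i. (\<sigma>^^Suc l) k)"
    by (simp only: prod.lessThan_Suc_shift funpow_0)
  ultimately show ?thesis by simp
qed

end

context skewf
begin

lemma deg_monom_less: "n < degree f \<Longrightarrow> degree (monom a n) < degree f"
  using degree_monom_le le_less_trans by blast

lemma t_pow: "i < degree f \<Longrightarrow> sf_pow \<sigma> f (monom 1 1) i = monom 1 i"
proof (induction i)
  case 0
  then show ?case by (simp add: monom_0 one_pCons)
next
  case (Suc i)
  then show ?case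
    by (simp add: sf_mult_def sm_monom rmod_small deg_monom_less s_one)
qed

lemma kt_pow: "i < degree f \<Longrightarrow> sf_pow \<sigma> f (monom k 1) i = monom (\<Prod>l<i. (\<sigma>^^l) k) i"
proof (induction i)
  case 0
  then show ?case by (simp add: monom_0 one_pCons)
next
  case (Suc i)
  have "sf_pow \<sigma> f (monom k 1) (Suc i) = rmod (monom (k * \<sigma> (\<Prod>l<i. (\<sigma>^^l) k)) (Suc i))"
    using Suc by (simp add: sf_mult_def sm_monom)
  also have "\<dots> = monom (\<Prod>l<Suc i. (\<sigma>^^l) k) (Suc i)"
    using Suc(2) by (simp only: prod_shift rmod_small deg_monom_less)
  finally show ?case .
qed

end

locale skewfm = skewf +
  assumes monic: "lead_coeff f = 1"
begin

lemma deg_tm: "degree (monom 1 (degree f) - f) < degree f"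
proof (cases "monom 1 (degree f) - f = 0")
  case True then show ?thesis using f_deg by simp
next
  case False
  have le: "degree (monom 1 (degree f) - f) \<le> degree f"
    by (rule degree_diff_le) (simp_all add: degree_monom_le)
  have "coeff (monom 1 (degree f) - f) (degree f) = 0" using monic by simp
  then have "degree (monom 1 (degree f) - f) \<noteq> degree f" using False
    by (metis leading_coeff_0_iff)
  then show ?thesis using le by simp
qed

lemma rmod_monom_m: "rmod (monom c (degree f)) = smult c (monom 1 (degree f) - f)"
proof -
  have "monom c (degree f) = sm [:c:] f + smult c (monom 1 (degree f) - f)"
    by (simp add: sm_const_left smult_monom smult_diff_right)
  moreover have "degree (smult c (monom 1 (degree f) - f)) < degree f"
    using deg_tm by (meson degree_smult_le le_less_trans)
  ultimately show ?thesis using rmod_unique by blast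
qed

lemma t_pow_m: "sf_pow \<sigma> f (monom 1 1) (degree f) = monom 1 (degree f) - f"
proof -
  obtain j where j: "degree f = Suc j" using f_deg by (cases "degree f") auto
  have "sf_pow \<sigma> f (monom 1 1) (Suc j) = rmod (monom 1 (Suc j))"
    using t_pow[of j] j by (simp add: sf_mult_def sm_monom s_one)
  then show ?thesis using rmod_monom_m[of 1] j by simp
qed

lemma kt_pow_m: "sf_pow \<sigma> f (monom k 1) (degree f) = smult (\<Prod>l<degree f. (\<sigma>^^l) k) (monom 1 (degree f) - f)"
proof -
  obtain j where j: "degree f = Suc j" using f_deg by (cases "degree f") auto
  have "sf_pow \<sigma> f (monom k 1) (Suc j) = rmod (monom (k * \<sigma> (\<Prod>l<j. (\<sigma>^^l) k)) (Suc j))"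
    using kt_pow[of j] j by (simp add: sf_mult_def sm_monom)
  then show ?thesis using rmod_monom_m j by (simp add: prod_shift)
qed

end

theorem mainTheorem1:
  fixes \<sigma> :: "'a::{finite,field} \<Rightarrow> 'a" and q n :: nat
    and f :: "'a poly" and H :: "'a poly \<Rightarrow> 'a poly"
  assumes card_K: "card (UNIV :: 'a set) = q ^ n"
    and aut: "field_automorphism \<sigma>"
    and n_gt: "n > 1"
    and ord_n: "\<sigma> ^^ n = id" "\<forall>j. 0 < j \<and> j < n \<longrightarrow> \<sigma> ^^ j \<noteq> id"
    and fixed: "card {x. \<sigma> x = x} = q"
    and monic: "lead_coeff f = 1"
    and deg: "degree f \<ge> 2"
    and irr: "skew_irreducible \<sigma> f"
    and not_ri: "\<not> right_invariant \<sigma> f"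
    and H: "loop_automorphism \<sigma> f H"
  shows "\<exists>\<tau>. mult_group_automorphism \<tau> \<and>
           H ` {[:z:] | z. z \<noteq> 0} = {[:z:] | z. z \<noteq> 0} \<and>
           (\<forall>z. z \<noteq> 0 \<longrightarrow> H [:z:] = [:\<tau> z:]) \<and>
           (n \<ge> degree f - 1 \<longrightarrow>
             (\<exists>k. k \<noteq> 0 \<and>
                H (monom 1 1) = monom k 1 \<and>
                (\<forall>i\<in>{1..degree f - 1}. \<forall>z. z \<noteq> 0 \<longrightarrow>
                   H (monom z i) = sf_mult \<sigma> f (H [:z:]) (sf_pow \<sigma> f (H (monom 1 1)) i) \<and>
                   H (monom z i) = sf_mult \<sigma> f [:\<tau> z:] (sf_pow \<sigma> f (monom k 1) i) \<and>
                   H (monom z i) = monom (\<tau> z * (\<Prod>l<i. (\<sigma> ^^ l) k)) i) \<and>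
                (\<forall>i\<in>{1..degree f}.
                   H (sf_pow \<sigma> f (monom 1 1) i) = sf_pow \<sigma> f (H (monom 1 1)) i \<and>
                   H (sf_pow \<sigma> f (monom 1 1) i) = sf_pow \<sigma> f (monom k 1) i \<and>
                   H (sf_pow \<sigma> f (monom 1 1) i) =
                     smult (\<Prod>l<i. (\<sigma> ^^ l) k) (sf_pow \<sigma> f (monom 1 1) i)) \<and>
                H (monom 1 (degree f) - f) =
                  smult (\<Prod>l<degree f. (\<sigma> ^^ l) k) (monom 1 (degree f) - f)))"
proof -
  have bs: "bij \<sigma>" and sadd: "\<And>x y. \<sigma> (x + y) = \<sigma> x + \<sigma> y"
    and smul: "\<And>x y. \<sigma> (x * y) = \<sigma> x * \<sigma> y" and sone: "\<sigma> 1 = 1"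
    using aut unfolding field_automorphism_def by auto
  interpret skewfi \<sigma> f
    by unfold_locales (use bs sadd smul sone deg irr in \<open>auto simp: bij_is_inj\<close>)
  interpret fm: skewfm \<sigma> f
    by unfold_locales (rule monic)
  have Hb: "bij_betw H (Lf f) (Lf f)" and Hm: "\<And>x y. x \<in> Lf f \<Longrightarrow> y \<in> Lf f \<Longrightarrow> H (x \<circ>\<^sub>f y) = H x \<circ>\<^sub>f H y"
    using H unfolding loop_automorphism_def by auto
  have HL: "H x \<in> Lf f" if "x \<in> Lf f" for x using Hb that by (meson bij_betwE)
  define C where "C = {[:z:] | z :: 'a. z \<noteq> 0}"
  have CL: "C \<subseteq> Lf f" using deg by (auto simp: C_def Lf_def)
  have HC: "H ` C \<subseteq> C"
  proof
    fix y assume "y \<in> H ` C"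
    then obtain z where z: "z \<noteq> 0" "y = H [:z:]" unfolding C_def by blast
    have zL: "[:z:] \<in> Lf f" using z CL C_def by blast
    have "LN (H [:z:])" using H_LN[OF H zL const_LN] .
    moreover have yL: "H [:z:] \<in> Lf f" using HL zL by blast
    ultimately have "degree (H [:z:]) = 0" using LN_deg0 not_ri by blast
    then have "H [:z:] = [:coeff (H [:z:]) 0:]" by (simp add: degree_0_id)
    moreover have "H [:z:] \<noteq> 0" using yL by (simp add: Lf_def)
    ultimately show "y \<in> C" unfolding C_def using z by (metis (mono_tags, lifting) mem_Collect_eq pCons_0_0)
  qed
  have finL: "finite (Lf f)" using finite_deg_less[OF finK, of "degree f"]
    by (rule finite_subset[rotated]) (auto simp: Lf_def)
  have finC: "finite C" using finite_subset[OF CL finL] .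
  have injL: "inj_on H (Lf f)" using Hb by (simp add: bij_betw_def)
  have injC: "inj_on H C" using inj_on_subset[OF injL CL] .
  have HCeq: "H ` C = C"
    using card_subset_eq[OF finC HC] card_image[OF injC] by simp
  define \<tau> where "\<tau> z = coeff (H [:z:]) 0" for z
  have Hz: "H [:z:] = [:\<tau> z:] \<and> \<tau> z \<noteq> 0" if "z \<noteq> 0" for z
  proof -
    have "H [:z:] \<in> C" using HC that unfolding C_def by blast
    then obtain w where "w \<noteq> 0" "H [:z:] = [:w:]" unfolding C_def by blast
    then show ?thesis by (simp add: \<tau>_def)
  qed
  have cmul: "[:x:] \<circ>\<^sub>f [:y:] = [:x * y:]" for x y
    using deg by (simp add: sf_mult_def sm_const_left rmod_small)
  have cL: "[:x:] \<in> Lf f" if "x \<noteq> 0" for x using that deg by (simp add: Lf_def)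
  have tmul: "\<tau> (x * y) = \<tau> x * \<tau> y" if "x \<noteq> 0" "y \<noteq> 0" for x y
  proof -
    have "[:\<tau> (x * y):] = H ([:x:] \<circ>\<^sub>f [:y:])" using Hz[of "x*y"] that cmul by simp
    also have "\<dots> = [:\<tau> x:] \<circ>\<^sub>f [:\<tau> y:]" using Hm[OF cL cL] that Hz by simp
    also have "\<dots> = [:\<tau> x * \<tau> y:]" by (rule cmul)
    finally show ?thesis by simp
  qed
  have tinj: "inj_on \<tau> (UNIV - {0})"
  proof (rule inj_onI)
    fix x y assume x: "x \<in> UNIV - {0}" and y: "y \<in> UNIV - {0}" and e: "\<tau> x = \<tau> y"
    then have "H [:x:] = H [:y:]" using Hz by auto
    moreover have "[:x:] \<in> Lf f" "[:y:] \<in> Lf f" using cL x y by auto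
    ultimately have "[:x:] = [:y:]" using injL by (meson inj_onD)
    then show "x = y" by simp
  qed
  have tsurj: "\<exists>z. z \<noteq> 0 \<and> w = \<tau> z" if "w \<noteq> 0" for w
  proof -
    have "[:w:] \<in> H ` C" using HCeq that unfolding C_def by blast
    then obtain z where "z \<noteq> 0" "[:w:] = H [:z:]" unfolding C_def by blast
    then show ?thesis using Hz by auto
  qed
  have timg: "\<tau> ` (UNIV - {0}) = UNIV - {0}"
    using Hz tsurj by fastforce
  have mga: "mult_group_automorphism \<tau>"
    unfolding mult_group_automorphism_def bij_betw_def using tinj timg tmul by blast
  have part1: "H ` {[:z:] | z. z \<noteq> 0} = {[:z:] | z. z \<noteq> 0}" using HCeq C_def by simp
  have part2: "\<forall>z. z \<noteq> 0 \<longrightarrow> H [:z:] = [:\<tau> z:]" using Hz by blast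
  define t where "t = (monom 1 1 :: 'a poly)"
  have tL: "t \<in> Lf f" using deg by (simp add: t_def Lf_def degree_monom_eq)
  have part3: "n \<ge> degree f - 1 \<longrightarrow>
             (\<exists>k. k \<noteq> 0 \<and>
                H (monom 1 1) = monom k 1 \<and>
                (\<forall>i\<in>{1..degree f - 1}. \<forall>z. z \<noteq> 0 \<longrightarrow>
                   H (monom z i) = sf_mult \<sigma> f (H [:z:]) (sf_pow \<sigma> f (H (monom 1 1)) i) \<and>
                   H (monom z i) = sf_mult \<sigma> f [:\<tau> z:] (sf_pow \<sigma> f (monom k 1) i) \<and>
                   H (monom z i) = monom (\<tau> z * (\<Prod>l<i. (\<sigma> ^^ l) k)) i) \<and>
                (\<forall>i\<in>{1..degree f}.
                   H (sf_pow \<sigma> f (monom 1 1) i) = sf_pow \<sigma> f (H (monom 1 1)) i \<and>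
                   H (sf_pow \<sigma> f (monom 1 1) i) = sf_pow \<sigma> f (monom k 1) i \<and>
                   H (sf_pow \<sigma> f (monom 1 1) i) =
                     smult (\<Prod>l<i. (\<sigma> ^^ l) k) (sf_pow \<sigma> f (monom 1 1) i)) \<and>
                H (monom 1 (degree f) - f) =
                  smult (\<Prod>l<degree f. (\<sigma> ^^ l) k) (monom 1 (degree f) - f))"
  proof
    assume nm: "n \<ge> degree f - 1"
    define h where "h = H t"
    have hL: "h \<in> Lf f" using HL tL by (simp add: h_def)
    have h0: "h \<noteq> 0" and dh: "degree h < degree f" using hL by (auto simp: Lf_def)
    have comm: "t \<circ>\<^sub>f [:z:] = [:\<sigma> z:] \<circ>\<^sub>f t" for z
    proof -
      have "t \<circ>\<^sub>f [:z:] = rmod (monom (\<sigma> z) 1)"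
        unfolding sf_mult_def t_def monom_0[symmetric] by (simp add: sm_monom)
      moreover have "[:\<sigma> z:] \<circ>\<^sub>f t = rmod (monom (\<sigma> z) 1)"
        unfolding sf_mult_def t_def by (simp add: sm_const_left smult_monom)
      ultimately show ?thesis by simp
    qed
    have sz0: "\<sigma> z \<noteq> 0" if "z \<noteq> 0" for z using sp_eq0[of 1 z] that by simp
    have hc: "h \<circ>\<^sub>f [:\<tau> z:] = [:\<tau> (\<sigma> z):] \<circ>\<^sub>f h" if z0: "z \<noteq> 0" for z
    proof -
      have "h \<circ>\<^sub>f [:\<tau> z:] = H (t \<circ>\<^sub>f [:z:])" using Hm[OF tL cL[OF z0]] Hz[OF z0] h_def by simp
      also have "\<dots> = H ([:\<sigma> z:] \<circ>\<^sub>f t)" by (simp add: comm)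
      also have "\<dots> = [:\<tau> (\<sigma> z):] \<circ>\<^sub>f h" using Hm[OF cL[OF sz0[OF z0]] tL] Hz[OF sz0[OF z0]] h_def by simp
      finally show ?thesis .
    qed
    have rc: "h \<circ>\<^sub>f [:c:] = sm h [:c:]" for c
    proof -
      have "degree (sm h [:c:]) \<le> degree h"
        by (rule degree_le) (simp add: coeff_sm_const_right coeff_eq_0)
      then show ?thesis unfolding sf_mult_def using dh by (simp add: rmod_small)
    qed
    have lc: "[:c:] \<circ>\<^sub>f h = smult c h" for c
    proof -
      have "degree (smult c h) < degree f" using dh by (meson degree_smult_le le_less_trans)
      then show ?thesis unfolding sf_mult_def by (simp add: sm_const_left rmod_small)
    qed
    have coef: "coeff h i * (\<sigma>^^i) (\<tau> z) = \<tau> (\<sigma> z) * coeff h i" if "z \<noteq> 0" for i z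
      using arg_cong[OF hc[OF that], of "\<lambda>p. coeff p i"] by (simp add: rc lc coeff_sm_const_right)
    obtain g :: 'a where g: "g \<noteq> 0" "\<forall>x. x \<noteq> 0 \<longrightarrow> (\<exists>j::nat. x = g ^ j)"
      using finite_field_cyclic by blast
    obtain e where e: "\<sigma> g = g ^ e" using g sz0[OF g(1)] by blast
    have spow: "\<sigma> x = x ^ e" if "x \<noteq> 0" for x
    proof -
      have "\<exists>j::nat. x = g ^ j" using g(2) that by simp
      then obtain j :: nat where "x = g ^ j" by (elim exE)
      then show ?thesis using e by (simp add: s_power flip: power_mult) (simp add: mult.commute)
    qed
    have t1: "\<tau> 1 = 1"
    proof -
      have "\<tau> 1 = \<tau> 1 * \<tau> 1" using tmul[of 1 1] by simp
      moreover have "\<tau> 1 \<noteq> 0" using Hz[of 1] by simp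
      ultimately show ?thesis by (metis mult_cancel_left1)
    qed
    have tpow: "\<tau> (x ^ j) = \<tau> x ^ j" if "x \<noteq> 0" for x j
    proof (induction j)
      case 0 then show ?case using t1 by simp
    next
      case (Suc j) then show ?case using tmul[of x "x ^ j"] that by simp
    qed
    have "\<sigma>^^1 \<noteq> id" using ord_n(2) n_gt by blast
    then have sid: "\<sigma> \<noteq> id" by simp
    have only1: "i = 1" if ci: "coeff h i \<noteq> 0" for i
    proof -
      have "(\<sigma>^^i) w = \<sigma> w" for w
      proof (cases "w = 0")
        case True then show ?thesis using s_zero by simp
      next
        case False
        then obtain z where z: "z \<noteq> 0" "w = \<tau> z" using tsurj by blast
        have "(\<sigma>^^i) w = \<tau> (\<sigma> z)" using coef[OF z(1), of i] ci z(2) by (simp add: mult.commute)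
        also have "\<dots> = \<tau> z ^ e" using spow[OF z(1)] tpow[OF z(1)] by simp
        also have "\<dots> = \<sigma> w" using spow[OF False] z(2) by simp
        finally show ?thesis .
      qed
      then have si: "\<sigma>^^i = \<sigma>" by (simp add: fun_eq_iff)
      have i0: "i \<noteq> 0"
      proof
        assume "i = 0" then show False using si sid by simp
      qed
      have "(\<sigma>^^(i-1)) x = x" for x
      proof -
        obtain i' where i': "i = Suc i'" using i0 by (cases i) auto
        have "\<sigma> ((\<sigma>^^(i-1)) x) = (\<sigma>^^i) x" by (simp add: i')
        also have "\<dots> = \<sigma> x" using si by simp
        finally show ?thesis using bs by (meson bij_is_inj injD)
      qed
      then have sid1: "\<sigma>^^(i-1) = id" by (simp add: fun_eq_iff)
      have "i \<le> degree h" using ci by (rule le_degree)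
      then have "i - 1 < n" using dh nm i0 by linarith
      then have "\<not> (0 < i - 1)" using ord_n(2)[rule_format, of "i - 1"] sid1 by auto
      then show "i = 1" using i0 by simp
    qed
    define k where "k = coeff h 1"
    have hk: "h = monom k 1"
    proof (rule poly_eqI)
      fix j show "coeff h j = coeff (monom k 1) j"
        using only1[of j] by (cases "j = 1") (auto simp: k_def)
    qed
    have k0: "k \<noteq> 0" using hk h0 by auto
    have Ht: "H (monom 1 1) = monom k 1" using hk by (simp add: h_def t_def)
    have Hpow: "H (sf_pow \<sigma> f t i) = sf_pow \<sigma> f (H t) i" if "1 \<le> i" "i \<le> degree f" for i
      using that
    proof (induction i)
      case 0 then show ?case by simp
    next
      case (Suc j)
      show ?case
      proof (cases "j = 0")
        case True
        have "sf_pow \<sigma> f t 1 = t" using tL by (simp add: sf_mult_def rmod_small Lf_def)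
        moreover have "sf_pow \<sigma> f (H t) 1 = H t" using HL[OF tL] by (simp add: sf_mult_def rmod_small Lf_def)
        ultimately show ?thesis using True by simp
      next
        case False
        have tj: "sf_pow \<sigma> f t j = monom 1 j" using t_pow[of j] Suc(3) by (simp add: t_def)
        have tjL: "sf_pow \<sigma> f t j \<in> Lf f" using tj Suc(3) by (simp add: Lf_def degree_monom_eq)
        have "H (sf_pow \<sigma> f t (Suc j)) = H t \<circ>\<^sub>f H (sf_pow \<sigma> f t j)" using Hm[OF tL tjL] by simp
        also have "\<dots> = H t \<circ>\<^sub>f sf_pow \<sigma> f (H t) j" using Suc False by simp
        finally show ?thesis by simp
      qed
    qed
    define N where "N i = (\<Prod>l<i. (\<sigma> ^^ l) k)" for i
    have A: "H (monom z i) = sf_mult \<sigma> f (H [:z:]) (sf_pow \<sigma> f (H (monom 1 1)) i) \<and>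
                   H (monom z i) = sf_mult \<sigma> f [:\<tau> z:] (sf_pow \<sigma> f (monom k 1) i) \<and>
                   H (monom z i) = monom (\<tau> z * (\<Prod>l<i. (\<sigma> ^^ l) k)) i"
      if i: "i \<in> {1..degree f - 1}" and z: "z \<noteq> 0" for i z
    proof -
      have il: "i < degree f" and i1: "1 \<le> i" using i deg by auto
      have ti: "sf_pow \<sigma> f t i = monom 1 i" using t_pow[OF il] by (simp add: t_def)
      have tiL: "monom 1 i \<in> Lf f" using il by (simp add: Lf_def degree_monom_eq)
      have mz: "monom z i = [:z:] \<circ>\<^sub>f monom 1 i"
        using il by (simp add: sf_mult_def sm_const_left smult_monom rmod_small deg_monom_less)
      have 1: "H (monom z i) = H [:z:] \<circ>\<^sub>f sf_pow \<sigma> f (H t) i"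
        using Hm[OF cL[OF z] tiL] Hpow[OF i1 less_imp_le[OF il]] ti mz by simp
      have 2: "H [:z:] \<circ>\<^sub>f sf_pow \<sigma> f (H t) i = [:\<tau> z:] \<circ>\<^sub>f sf_pow \<sigma> f (monom k 1) i"
        using Hz[OF z] Ht by (simp add: t_def)
      have 3: "[:\<tau> z:] \<circ>\<^sub>f sf_pow \<sigma> f (monom k 1) i = monom (\<tau> z * (\<Prod>l<i. (\<sigma> ^^ l) k)) i"
        unfolding kt_pow[OF il] sf_mult_def using il by (simp add: sm_const_left smult_monom rmod_small deg_monom_less)
      show ?thesis using 1 2 3 by (simp add: t_def)
    qed
    have B: "H (sf_pow \<sigma> f (monom 1 1) i) = sf_pow \<sigma> f (H (monom 1 1)) i \<and>
                   H (sf_pow \<sigma> f (monom 1 1) i) = sf_pow \<sigma> f (monom k 1) i \<and>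
                   H (sf_pow \<sigma> f (monom 1 1) i) =
                     smult (\<Prod>l<i. (\<sigma> ^^ l) k) (sf_pow \<sigma> f (monom 1 1) i)"
      if i: "i \<in> {1..degree f}" for i
    proof -
      have 1: "H (sf_pow \<sigma> f (monom 1 1) i) = sf_pow \<sigma> f (H (monom 1 1)) i"
        using Hpow i by (simp add: t_def)
      have 3: "sf_pow \<sigma> f (monom k 1) i = smult (\<Prod>l<i. (\<sigma> ^^ l) k) (sf_pow \<sigma> f (monom 1 1) i)"
      proof (cases "i < degree f")
        case True
        then show ?thesis unfolding kt_pow[OF True] t_pow[OF True] by (simp add: smult_monom)
      next
        case False
        then have "i = degree f" using i by simp
        then show ?thesis using fm.kt_pow_m[of k] fm.t_pow_m by simp
      qed
      show ?thesis using 1 3 Ht by simp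
    qed
    have C: "H (monom 1 (degree f) - f) = smult (\<Prod>l<degree f. (\<sigma> ^^ l) k) (monom 1 (degree f) - f)"
    proof -
      have "degree f \<in> {1..degree f}" using deg by simp
      from B[OF this] have "H (sf_pow \<sigma> f (monom 1 1) (degree f)) =
                     smult (\<Prod>l<degree f. (\<sigma> ^^ l) k) (sf_pow \<sigma> f (monom 1 1) (degree f))" by blast
      then show ?thesis unfolding fm.t_pow_m .
    qed
    show "\<exists>k. k \<noteq> 0 \<and>
                H (monom 1 1) = monom k 1 \<and>
                (\<forall>i\<in>{1..degree f - 1}. \<forall>z. z \<noteq> 0 \<longrightarrow>
                   H (monom z i) = sf_mult \<sigma> f (H [:z:]) (sf_pow \<sigma> f (H (monom 1 1)) i) \<and>
                   H (monom z i) = sf_mult \<sigma> f [:\<tau> z:] (sf_pow \<sigma> f (monom k 1) i) \<and>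
                   H (monom z i) = monom (\<tau> z * (\<Prod>l<i. (\<sigma> ^^ l) k)) i) \<and>
                (\<forall>i\<in>{1..degree f}.
                   H (sf_pow \<sigma> f (monom 1 1) i) = sf_pow \<sigma> f (H (monom 1 1)) i \<and>
                   H (sf_pow \<sigma> f (monom 1 1) i) = sf_pow \<sigma> f (monom k 1) i \<and>
                   H (sf_pow \<sigma> f (monom 1 1) i) =
                     smult (\<Prod>l<i. (\<sigma> ^^ l) k) (sf_pow \<sigma> f (monom 1 1) i)) \<and>
                H (monom 1 (degree f) - f) =
                  smult (\<Prod>l<degree f. (\<sigma> ^^ l) k) (monom 1 (degree f) - f)"
      apply (rule exI[of _ k])
      apply (intro conjI k0 Ht C ballI allI impI)
      using A B by blast+
  qed
  show ?thesis using mga part1 part2 part3 by blast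
qed

end
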